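(* Let $p,k\ge 1$ be integers, let $a_1,\dots,a_k\in\mathbb{R}$, and let $\mathbf{f}:\mathbb{R}^p\to\mathbb{R}^p$ be a differentiable flux. Let $\mathbb{M}_1,\dots,\mathbb{M}_k:\mathbb{R}^p\to\mathbb{R}^p$ be differentiable maps satisfying, for all $\mathbf{u}$, $\sum_{i=1}^k \mathbb{M}_i(\mathbf{u})=\mathbf{u}$ and $\sum_{i=1}^k a_i\mathbb{M}_i(\mathbf{u})=\mathbf{f}(\mathbf{u})$, and set $\mathbf{m}_2(\mathbf{u})=\sum_{i=1}^k a_i^2\mathbb{M}_i(\mathbf{u})$. Fix $\mathbf{u}$ and suppose there exists a strictly convex entropy $\eta(\mathbf{u})$ with Hessian matrix $\mathbf{A}_0$ such that (1) $\mathbf{A}_0\mathbf{f}'(\mathbf{u})$ is symmetric, (2) $\mathbf{A}_0\mathbb{M}_i'(\mathbf{u})$ is symmetric positive definite for all $i$, and (3) $\min_i|a_i|>\rho(\mathbf{f}'(\mathbf{u}))$ (spectral radius). Then the matrix $\mathbf{m}_2'(\mathbf{u})-(\mathbf{f}'(\mathbf{u}))^2$ has real strictly positive eigenvalues and is invertible.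
   Context: Primes denote Jacobian matrices with respect to $\mathbf{u}$. In the kinetic model, $\mathbf{m}_2=\mathbb{P}\Lambda^2\mathbb{M}$ with $\Lambda=\mathrm{diag}(a_1\mathbf{I}_p,\dots,a_k\mathbf{I}_p)$ and $\mathbb{P}=(\mathbf{I}_p\ \cdots\ \mathbf{I}_p)$. *)

theory Defs
  imports "HOL-Analysis.Analysis"
begin

definition strict_convex_on :: "'a::real_vector set \<Rightarrow> ('a \<Rightarrow> real) \<Rightarrow> bool" where
  "strict_convex_on S g \<longleftrightarrow> convex S \<and>
     (\<forall>x\<in>S. \<forall>y\<in>S. x \<noteq> y \<longrightarrow> (\<forall>t::real. 0 < t \<and> t < 1 \<longrightarrow>
        g ((1 - t) *\<^sub>R x + t *\<^sub>R y) < (1 - t) * g x + t * g y))"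

definition grad :: "(real^'n \<Rightarrow> real) \<Rightarrow> real^'n \<Rightarrow> real^'n" where
  "grad g y = (\<chi> i. frechet_derivative g (at y) (axis i 1))"

definition hessian :: "(real^'n \<Rightarrow> real) \<Rightarrow> real^'n \<Rightarrow> real^'n^'n" where
  "hessian g y = jacobian (grad g) (at y)"

definition symmetric_mat :: "real^'n^'n \<Rightarrow> bool" where
  "symmetric_mat A \<longleftrightarrow> transpose A = A"

definition pos_def_sym :: "real^'n^'n \<Rightarrow> bool" where
  "pos_def_sym A \<longleftrightarrow> symmetric_mat A \<and> (\<forall>x. x \<noteq> 0 \<longrightarrow> x \<bullet> (A *v x) > 0)"

definition cmat :: "real^'n^'m \<Rightarrow> complex^'n^'m" where
  "cmat A = (\<chi> i j. complex_of_real (A $ i $ j))"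

definition eigenvalues :: "real^'n^'n \<Rightarrow> complex set" where
  "eigenvalues A = {c. \<exists>v::complex^'n. v \<noteq> 0 \<and> cmat A *v v = c *s v}"

definition spec_radius :: "real^'n^'n \<Rightarrow> real" where
  "spec_radius A = Max (cmod ` eigenvalues A)"

end

theory Submission
  imports Defs
begin

lemma jac_apply:
  fixes F :: "real^'n \<Rightarrow> real^'m"
  assumes "(F has_derivative L) (at u)"
  shows "jacobian F (at u) *v h = L h"
proof -
  have "F differentiable (at u)" using assms differentiable_def by blast
  then have "(F has_derivative (\<lambda>h. jacobian F (at u) *v h)) (at u)" using jacobian_works by blast
  then have "(\<lambda>h. jacobian F (at u) *v h) = L" using assms has_derivative_unique by blast
  then show ?thesis by metis
qed

lemma jac_sum:
  fixes g :: "nat \<Rightarrow> real^'n \<Rightarrow> real^'m"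
  assumes "finite I" "\<And>i. i \<in> I \<Longrightarrow> g i differentiable (at u)"
  shows "jacobian (\<lambda>x. \<Sum>i\<in>I. c i *\<^sub>R g i x) (at u) *v h = (\<Sum>i\<in>I. c i *\<^sub>R (jacobian (g i) (at u) *v h))"
proof -
  have "((\<lambda>x. \<Sum>i\<in>I. c i *\<^sub>R g i x) has_derivative (\<lambda>h. \<Sum>i\<in>I. c i *\<^sub>R (jacobian (g i) (at u) *v h))) (at u)"
    apply (rule has_derivative_sum)
    apply (rule has_derivative_scaleR_right)
    using assms(2) jacobian_works by blast
  then show ?thesis by (rule jac_apply)
qed

lemma sym_bil:
  fixes X :: "real^'n^'n"
  assumes "symmetric_mat X"
  shows "x \<bullet> (X *v y) = y \<bullet> (X *v x)"
proof -
  have "x \<bullet> (X *v y) = (x v* X) \<bullet> y" by (simp add: dot_lmul_matrix)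
  also have "\<dots> = (transpose X *v x) \<bullet> y" by simp
  also have "\<dots> = y \<bullet> (X *v x)" using assms by (simp add: symmetric_mat_def inner_commute)
  finally show ?thesis .
qed

definition rp :: "complex^'n \<Rightarrow> real^'n" where "rp v = (\<chi> i. Re (v$i))"
definition ip :: "complex^'n \<Rightarrow> real^'n" where "ip v = (\<chi> i. Im (v$i))"
definition hf :: "real^'n^'n \<Rightarrow> complex^'n \<Rightarrow> complex" where
  "hf X v = (\<Sum>i\<in>UNIV. cnj (v$i) * (cmat X *v v)$i)"

lemma hf_Re: "Re (hf X v) = rp v \<bullet> (X *v rp v) + ip v \<bullet> (X *v ip v)"
  unfolding hf_def cmat_def matrix_vector_mult_def inner_vec_def rp_def ip_def
  by (simp add: Re_sum sum_distrib_left sum.distrib[symmetric] algebra_simps)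

lemma hf_Im: "Im (hf X v) = rp v \<bullet> (X *v ip v) - ip v \<bullet> (X *v rp v)"
  unfolding hf_def cmat_def matrix_vector_mult_def inner_vec_def rp_def ip_def
  by (simp add: Im_sum sum_distrib_left sum_subtractf[symmetric] algebra_simps)

lemma rp_ip_nz: "v \<noteq> 0 \<Longrightarrow> rp v \<noteq> 0 \<or> ip v \<noteq> 0"
  by (auto simp: rp_def ip_def vec_eq_iff complex_eq_iff)

lemma cmat_mult: "cmat (A ** B) = cmat A ** cmat B"
  by (simp add: cmat_def matrix_matrix_mult_def vec_eq_iff)

lemma hf_eig:
  assumes "cmat N *v v = c *s v"
  shows "hf (A ** N) v = c * hf A v"
proof -
  have "cmat (A ** N) *v v = cmat A *v (c *s v)"
    by (simp add: cmat_mult matrix_vector_mul_assoc[symmetric] assms)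
  also have "\<dots> = c *s (cmat A *v v)"
    by (simp add: matrix_vector_mult_def vec_eq_iff sum_distrib_left algebra_simps)
  finally show ?thesis unfolding hf_def by (simp add: sum_distrib_left algebra_simps)
qed

theorem corollary1:
  fixes k :: nat and a :: "nat \<Rightarrow> real"
    and f :: "real^'p \<Rightarrow> real^'p"
    and M :: "nat \<Rightarrow> real^'p \<Rightarrow> real^'p"
    and u :: "real^'p"
    and \<eta> :: "real^'p \<Rightarrow> real"
  assumes k: "k \<ge> 1"
    and f_diff: "\<And>x. f differentiable (at x)"
    and M_diff: "\<And>i x. i \<in> {1..k} \<Longrightarrow> M i differentiable (at x)"
    and sum_M: "\<And>x. (\<Sum>i=1..k. M i x) = x"
    and sum_aM: "\<And>x. (\<Sum>i=1..k. a i *\<^sub>R M i x) = f x"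
    and eta_diff: "\<And>x. \<eta> differentiable (at x)"
    and grad_diff: "grad \<eta> differentiable (at u)"
    and eta_convex: "strict_convex_on UNIV \<eta>"
    and sym_f: "symmetric_mat (hessian \<eta> u ** jacobian f (at u))"
    and spd_M: "\<And>i. i \<in> {1..k} \<Longrightarrow> pos_def_sym (hessian \<eta> u ** jacobian (M i) (at u))"
    and radius: "Min ((\<lambda>i. \<bar>a i\<bar>) ` {1..k}) > spec_radius (jacobian f (at u))"
  shows "(\<forall>c\<in>eigenvalues (jacobian (\<lambda>x. \<Sum>i=1..k. (a i)\<^sup>2 *\<^sub>R M i x) (at u)
                          - jacobian f (at u) ** jacobian f (at u)).
            Im c = 0 \<and> Re c > 0)
       \<and> invertible (jacobian (\<lambda>x. \<Sum>i=1..k. (a i)\<^sup>2 *\<^sub>R M i x) (at u)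
                          - jacobian f (at u) ** jacobian f (at u))"
proof -
  define B where "B i = jacobian (M i) (at u)" for i
  define J where "J = jacobian f (at u)"
  define A where "A = hessian \<eta> u"
  define Mm where "Mm = jacobian (\<lambda>x. \<Sum>i=1..k. (a i)\<^sup>2 *\<^sub>R M i x) (at u)"
  define C where "C i = A ** B i" for i
  define N where "N = Mm - J ** J"
  define P where "P = A ** N"
  have F1: "J *v h = (\<Sum>i=1..k. a i *\<^sub>R (B i *v h))" for h
  proof -
    have "f = (\<lambda>x. \<Sum>i=1..k. a i *\<^sub>R M i x)" using sum_aM by auto
    then show ?thesis unfolding J_def B_def using jac_sum[of "{1..k}" M u a h] M_diff by simp
  qed
  have F2: "Mm *v h = (\<Sum>i=1..k. (a i)\<^sup>2 *\<^sub>R (B i *v h))" for h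
    unfolding Mm_def B_def using jac_sum[of "{1..k}" M u "\<lambda>i. (a i)\<^sup>2" h] M_diff by simp
  have F3: "h = (\<Sum>i=1..k. B i *v h)" for h
  proof -
    have e: "(\<lambda>x. x) = (\<lambda>x. \<Sum>i=1..k. 1 *\<^sub>R M i x)" using sum_M by auto
    have "jacobian (\<lambda>x. x) (at u) *v h = h" by (rule jac_apply) (rule has_derivative_ident)
    then show ?thesis unfolding B_def using jac_sum[of "{1..k}" M u "\<lambda>i. 1" h] M_diff e by simp
  qed
  have CA: "A *v h = (\<Sum>i=1..k. C i *v h)" for h
  proof -
    have "A *v h = A *v (\<Sum>i=1..k. B i *v h)" using F3 by metis
    also have "\<dots> = (\<Sum>i=1..k. A *v (B i *v h))"
      using linear_sum[OF matrix_vector_mul_linear[of A]] by blast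
    finally show ?thesis by (simp add: C_def matrix_vector_mul_assoc)
  qed
  have CJ: "A *v (J *v h) = (\<Sum>i=1..k. a i *\<^sub>R (C i *v h))" for h
  proof -
    have "A *v (J *v h) = (\<Sum>i=1..k. A *v (a i *\<^sub>R (B i *v h)))"
      unfolding F1 using linear_sum[OF matrix_vector_mul_linear[of A]] by blast
    moreover have sc: "A *v (c *\<^sub>R w) = c *\<^sub>R (A *v w)" for c w
      using linear_cmul[OF matrix_vector_mul_linear[of A]] by blast
    ultimately show ?thesis by (simp only: sc C_def matrix_vector_mul_assoc)
  qed
  have CM: "A *v (Mm *v h) = (\<Sum>i=1..k. (a i)\<^sup>2 *\<^sub>R (C i *v h))" for h
  proof -
    have "A *v (Mm *v h) = (\<Sum>i=1..k. A *v ((a i)\<^sup>2 *\<^sub>R (B i *v h)))"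
      unfolding F2 using linear_sum[OF matrix_vector_mul_linear[of A]] by blast
    moreover have sc: "A *v (c *\<^sub>R w) = c *\<^sub>R (A *v w)" for c w
      using linear_cmul[OF matrix_vector_mul_linear[of A]] by blast
    ultimately show ?thesis by (simp only: sc C_def matrix_vector_mul_assoc)
  qed
  have Csym: "x \<bullet> (C i *v y) = y \<bullet> (C i *v x)" if "i \<in> {1..k}" for i x y
    using spd_M[OF that] sym_bil unfolding pos_def_sym_def C_def A_def B_def by blast
  have Cpos: "x \<bullet> (C i *v x) > 0" if "i \<in> {1..k}" "x \<noteq> 0" for i x
    using spd_M[OF that(1)] that(2) unfolding pos_def_sym_def C_def A_def B_def by blast
  have Asym: "x \<bullet> (A *v y) = y \<bullet> (A *v x)" for x y
    unfolding CA inner_sum_right using Csym by (intro sum.cong) auto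
  have Apos: "x \<bullet> (A *v x) > 0" if "x \<noteq> 0" for x
    unfolding CA inner_sum_right using Cpos[OF _ that] k by (intro sum_pos) auto
  have Pv: "P *v x = A *v (Mm *v x) - A *v (J *v (J *v x))" for x
    by (simp add: P_def N_def matrix_vector_mul_assoc[symmetric] matrix_vector_mult_diff_distrib matrix_vector_mult_diff_rdistrib)
  have AJsym: "x \<bullet> (A *v (J *v y)) = y \<bullet> (A *v (J *v x))" for x y
    unfolding CJ inner_sum_right using Csym by (intro sum.cong) auto
  have Psym: "x \<bullet> (P *v y) = y \<bullet> (P *v x)" for x y
  proof -
    have "x \<bullet> (P *v y) = x \<bullet> (A *v (Mm *v y)) - (J *v y) \<bullet> (A *v (J *v x))"
      unfolding Pv inner_diff_right using AJsym by simp
    moreover have "y \<bullet> (P *v x) = y \<bullet> (A *v (Mm *v x)) - (J *v x) \<bullet> (A *v (J *v y))"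
      unfolding Pv inner_diff_right using AJsym by simp
    moreover have "x \<bullet> (A *v (Mm *v y)) = y \<bullet> (A *v (Mm *v x))"
      unfolding CM inner_sum_right using Csym by (intro sum.cong) auto
    ultimately show ?thesis using Asym by simp
  qed
  have Pquad: "x \<bullet> (P *v x) = (\<Sum>i=1..k. (a i *\<^sub>R x - J *v x) \<bullet> (C i *v (a i *\<^sub>R x - J *v x)))" for x
  proof -
    define y where "y = J *v x"
    have t: "(a i *\<^sub>R x - y) \<bullet> (C i *v (a i *\<^sub>R x - y)) =
        (a i)\<^sup>2 * (x \<bullet> (C i *v x)) - 2 * (a i * (y \<bullet> (C i *v x))) + y \<bullet> (C i *v y)" if "i \<in> {1..k}" for i
      using Csym[OF that, of x y]
      by (simp add: matrix_vector_mult_diff_distrib inner_diff_left inner_diff_right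
          scaleR_matrix_vector_assoc[symmetric] vector_scaleR_matrix_ac power2_eq_square algebra_simps)
    have s1: "(\<Sum>i=1..k. (a i)\<^sup>2 * (x \<bullet> (C i *v x))) = x \<bullet> (A *v (Mm *v x))"
      unfolding CM inner_sum_right by simp
    have s2: "(\<Sum>i=1..k. a i * (y \<bullet> (C i *v x))) = y \<bullet> (A *v y)"
      unfolding y_def CJ inner_sum_right by simp
    have s3: "(\<Sum>i=1..k. y \<bullet> (C i *v y)) = y \<bullet> (A *v y)"
      unfolding CA inner_sum_right by simp
    have s4: "x \<bullet> (A *v (J *v y)) = y \<bullet> (A *v y)"
      using AJsym[of x y] by (simp add: y_def)
    have "(\<Sum>i=1..k. (a i *\<^sub>R x - y) \<bullet> (C i *v (a i *\<^sub>R x - y))) =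
       (\<Sum>i=1..k. (a i)\<^sup>2 * (x \<bullet> (C i *v x)) - 2 * (a i * (y \<bullet> (C i *v x))) + y \<bullet> (C i *v y))"
      using t by (intro sum.cong) auto
    also have "\<dots> = x \<bullet> (A *v (Mm *v x)) - 2 * (y \<bullet> (A *v y)) + y \<bullet> (A *v y)"
      unfolding sum.distrib sum_subtractf sum_distrib_left[symmetric] s1 s2 s3 by simp
    also have "\<dots> = x \<bullet> (P *v x)"
      unfolding Pv inner_diff_right using s4 by (simp add: y_def)
    finally show ?thesis by (simp add: y_def)
  qed
  have Ppos: "x \<bullet> (P *v x) > 0" if xnz: "x \<noteq> 0" for x
  proof (rule ccontr)
    assume "\<not> ?thesis"
    then have le: "(\<Sum>i=1..k. (a i *\<^sub>R x - J *v x) \<bullet> (C i *v (a i *\<^sub>R x - J *v x))) \<le> 0"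
      using Pquad by simp
    have nn: "\<forall>i\<in>{1..k}. (a i *\<^sub>R x - J *v x) \<bullet> (C i *v (a i *\<^sub>R x - J *v x)) \<ge> 0"
      using Cpos by (metis inner_zero_left order_le_less)
    have z: "\<forall>i\<in>{1..k}. (a i *\<^sub>R x - J *v x) \<bullet> (C i *v (a i *\<^sub>R x - J *v x)) = 0"
      using sum_nonneg_eq_0_iff[of "{1..k}"] nn le by (metis (no_types, lifting) antisym finite_atLeastAtMost sum_nonneg)
    have eqJ: "J *v x = a i *\<^sub>R x" if "i \<in> {1..k}" for i
    proof (rule ccontr)
      assume "J *v x \<noteq> a i *\<^sub>R x"
      then have "a i *\<^sub>R x - J *v x \<noteq> 0" by simp
      from Cpos[OF that this] z that show False by simp
    qed
    have 1: "1 \<in> {1..k}" using k by simp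
    have aeq: "a i = a 1" if "i \<in> {1..k}" for i
    proof -
      have "a i *\<^sub>R x = a 1 *\<^sub>R x" using eqJ[OF that] eqJ[OF 1] by auto
      then show ?thesis using xnz by (simp add: scaleR_cancel_right)
    qed
    have Jh: "J *v h = a 1 *\<^sub>R h" for h
    proof -
      have "J *v h = (\<Sum>i=1..k. a 1 *\<^sub>R (B i *v h))" unfolding F1
      proof (rule sum.cong[OF refl])
        fix i assume "i \<in> {1..k}"
        then have "a i = a 1" by (rule aeq)
        then show "a i *\<^sub>R (B i *v h) = a 1 *\<^sub>R (B i *v h)" by simp
      qed
      also have "\<dots> = a 1 *\<^sub>R (\<Sum>i=1..k. B i *v h)" by (simp add: scaleR_sum_right)
      also have "\<dots> = a 1 *\<^sub>R h" using F3[of h, symmetric] by simp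
      finally show ?thesis .
    qed
    have cJ: "cmat J *v v = complex_of_real (a 1) *s v" for v
    proof -
      have "J $ i $ j = (if i = j then a 1 else 0)" for i j
      proof -
        have "J $ i $ j = (J *v axis j 1) $ i"
          by (simp add: matrix_vector_mult_basis column_def)
        then show ?thesis using Jh[of "axis j 1"] by (simp add: axis_def)
      qed
      then have "cmat J $ i $ j = (if j = i then complex_of_real (a 1) else 0)" for i j
        by (simp add: cmat_def)
      then have "(cmat J *v v) $ i = complex_of_real (a 1) * v $ i" for i
        by (simp add: matrix_vector_mult_def if_distrib[of "\<lambda>x. x * _"] cong: if_cong)
      then show ?thesis by (simp add: vec_eq_iff)
    qed
    have "eigenvalues J = {complex_of_real (a 1)}"
    proof
      show "eigenvalues J \<subseteq> {complex_of_real (a 1)}"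
      proof
        fix c assume "c \<in> eigenvalues J"
        then obtain v :: "complex^'p" where v: "v \<noteq> 0" "cmat J *v v = c *s v"
          unfolding eigenvalues_def by blast
        obtain i where "v $ i \<noteq> 0" using v(1) vec_eq_iff[of v 0] by auto
        moreover have "c * v $ i = complex_of_real (a 1) * v $ i"
        proof -
          have "c *s v = cmat J *v v" using v(2) by (rule sym)
          also have "\<dots> = complex_of_real (a 1) *s v" by (rule cJ)
          finally have "(c *s v) $ i = (complex_of_real (a 1) *s v) $ i" by (rule arg_cong)
          then show ?thesis by (simp only: vector_smult_component)
        qed
        ultimately show "c \<in> {complex_of_real (a 1)}" by simp
      qed
      show "{complex_of_real (a 1)} \<subseteq> eigenvalues J"
      proof -
        have nz: "(vec 1 :: complex^'p) \<noteq> 0" by (simp add: vec_eq_iff)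
        have "complex_of_real (a 1) \<in> eigenvalues J" unfolding eigenvalues_def
          by (intro CollectI exI[of _ "vec 1"] conjI nz cJ)
        then show ?thesis by simp
      qed
    qed
    then have "spec_radius J = \<bar>a 1\<bar>" by (simp add: spec_radius_def)
    moreover have "Min ((\<lambda>i. \<bar>a i\<bar>) ` {1..k}) \<le> \<bar>a 1\<bar>" using 1 by (intro Min_le) auto
    ultimately show False using radius unfolding J_def by simp
  qed
  have eig: "Im c = 0 \<and> Re c > 0" if "c \<in> eigenvalues N" for c
  proof -
    have "\<exists>v::complex^'p. v \<noteq> 0 \<and> cmat N *v v = c *s v" using that by (simp add: eigenvalues_def)
    then obtain v :: "complex^'p" where v: "v \<noteq> 0" "cmat N *v v = c *s v" by (elim exE conjE)
    have hP: "hf P v = c * hf A v" unfolding P_def by (rule hf_eig[OF v(2)])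
    have pos: "Re (hf X v) > 0" "Im (hf X v) = 0" if "\<And>x. x \<noteq> 0 \<Longrightarrow> x \<bullet> (X *v x) > 0"
      "\<And>x y. x \<bullet> (X *v y) = y \<bullet> (X *v x)" for X
    proof -
      show "Im (hf X v) = 0" unfolding hf_Im using that(2)[of "rp v" "ip v"] by simp
      have n1: "rp v \<bullet> (X *v rp v) \<ge> 0"
        using that(1)[of "rp v"] by (cases "rp v = 0") auto
      have n2: "ip v \<bullet> (X *v ip v) \<ge> 0"
        using that(1)[of "ip v"] by (cases "ip v = 0") auto
      show "Re (hf X v) > 0" unfolding hf_Re
      proof (cases "rp v = 0")
        case True
        then have "ip v \<noteq> 0" using rp_ip_nz[OF v(1)] by simp
        then show "0 < rp v \<bullet> (X *v rp v) + ip v \<bullet> (X *v ip v)" using that(1) n1 by (simp add: add_nonneg_pos)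
      next
        case False
        then show "0 < rp v \<bullet> (X *v rp v) + ip v \<bullet> (X *v ip v)" using that(1) n2 by (simp add: add_pos_nonneg)
      qed
    qed
    have A1: "Re (hf A v) > 0" "Im (hf A v) = 0" using pos[OF Apos Asym] by auto
    have P1: "Re (hf P v) > 0" "Im (hf P v) = 0" using pos[OF Ppos Psym] by auto
    define \<alpha> where "\<alpha> = Re (hf A v)"
    define \<beta> where "\<beta> = Re (hf P v)"
    have ap: "\<alpha> > 0" "\<beta> > 0" using A1 P1 by (simp_all add: \<alpha>_def \<beta>_def)
    have eA: "hf A v = complex_of_real \<alpha>" using A1 by (simp add: complex_eq_iff \<alpha>_def)
    have eP: "hf P v = complex_of_real \<beta>" using P1 by (simp add: complex_eq_iff \<beta>_def)
    have "complex_of_real \<beta> = c * complex_of_real \<alpha>" using hP by (simp only: eA eP)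
    then have "c = complex_of_real (\<beta> / \<alpha>)" using ap by (simp add: field_simps)
    then show ?thesis using ap by simp
  qed
  have inv: "invertible N"
    unfolding invertible_left_inverse matrix_left_invertible_ker
  proof (intro allI impI)
    fix x assume "N *v x = 0"
    then have "P *v x = 0" by (simp add: P_def matrix_vector_mul_assoc[symmetric])
    then show "x = 0" using Ppos[of x] by (cases "x = 0") auto
  qed
  show ?thesis using eig inv unfolding N_def Mm_def J_def by blast
qed

end
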